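(* If $J,K$ are two independent randomly-stopped bit sequences, then their concatenation $J\Vert K$ is a randomly-stopped bit sequence.
   Context: $\{0,1\}^*:=\bigcup_{n\ge0}\{0,1\}^n$; for $K\in\{0,1\}^*$, $|K|$ is its length, $K_i$ its $i$-th entry, and $K^{j}=(K_1,\dots,K_j)$; $J\Vert K$ denotes concatenation of sequences. A random $K\in\{0,1\}^*$ is a randomly-stopped bit sequence if $\mathbb{P}(K_n=k_n\mid |K|\ge n,\,K^{n-1}=k^{n-1})=1/2$ for all $n\ge1$ and all $k^n\in\{0,1\}^n$ with $\mathbb{P}(|K|\ge n,\,K^{n-1}=k^{n-1})>0$. *)

theory Defs
  imports "HOL-Probability.Probability"
begin

text \<open>Bit sequences are rendered as \<open>bool list\<close> (False = 0, True = 1);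
  the i-th entry K_i is \<open>K ! (i-1)\<close> and the prefix K^j is \<open>take j K\<close>.\<close>

definition rsbs :: "'a measure \<Rightarrow> ('a \<Rightarrow> bool list) \<Rightarrow> bool" where
  "rsbs M K \<longleftrightarrow>
     (\<forall>n::nat. \<forall>k::bool list. 1 \<le> n \<longrightarrow> length k = n \<longrightarrow>
        measure M {\<omega> \<in> space M. n \<le> length (K \<omega>) \<and> take (n - 1) (K \<omega>) = take (n - 1) k} > 0 \<longrightarrow>
        measure M {\<omega> \<in> space M. n \<le> length (K \<omega>) \<and> take (n - 1) (K \<omega>) = take (n - 1) k
                                 \<and> K \<omega> ! (n - 1) = k ! (n - 1)}
        / measure M {\<omega> \<in> space M. n \<le> length (K \<omega>) \<and> take (n - 1) (K \<omega>) = take (n - 1) k}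
        = 1 / 2)"

end

theory Submission
  imports Defs
begin
lemma meas:
  fixes J K :: "'a \<Rightarrow> bool list"
  assumes "J \<in> M \<rightarrow>\<^sub>M count_space UNIV" "K \<in> M \<rightarrow>\<^sub>M count_space UNIV"
  shows "{x\<in>space M. P (J x) (K x)} \<in> sets M"
proof -
  have "(\<lambda>x. (J x, K x)) \<in> M \<rightarrow>\<^sub>M count_space UNIV"
  proof -
    have "(\<lambda>x. (J x, K x)) \<in> M \<rightarrow>\<^sub>M count_space UNIV \<Otimes>\<^sub>M count_space UNIV"
      using assms by (auto intro!: measurable_Pair)
    also have "count_space (UNIV::bool list set) \<Otimes>\<^sub>M count_space (UNIV::bool list set) = count_space UNIV"
      using pair_measure_countable[of "UNIV::bool list set" "UNIV::bool list set"] by (simp add: UNIV_Times_UNIV)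
    finally show ?thesis .
  qed
  then have "(\<lambda>x. (J x, K x)) -` {(a,b). P a b} \<inter> space M \<in> sets M"
    by (rule measurable_sets) simp
  moreover have "(\<lambda>x. (J x, K x)) -` {(a,b). P a b} \<inter> space M = {x\<in>space M. P (J x) (K x)}" by auto
  ultimately show ?thesis by simp
qed

lemma indep2:
  fixes J K :: "'a \<Rightarrow> bool list"
  assumes "prob_space M" "prob_space.indep_var M (count_space UNIV) J (count_space UNIV) K"
  shows "measure M {x\<in>space M. A (J x) \<and> B (K x)} = measure M {x\<in>space M. A (J x)} * measure M {x\<in>space M. B (K x)}"
proof -
  have "measure M ((\<lambda>x. (J x, K x)) -` ({y. A y} \<times> {y. B y}) \<inter> space M) =
    measure M (J -` {y. A y} \<inter> space M) * measure M (K -` {y. B y} \<inter> space M)"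
    using prob_space.indep_varD[OF assms(1) assms(2)] by simp
  moreover have "(\<lambda>x. (J x, K x)) -` ({y. A y} \<times> {y. B y}) \<inter> space M = {x\<in>space M. A (J x) \<and> B (K x)}" by auto
  moreover have "J -` {y. A y} \<inter> space M = {x\<in>space M. A (J x)}" by auto
  moreover have "K -` {y. B y} \<inter> space M = {x\<in>space M. B (K x)}" by auto
  ultimately show ?thesis by simp
qed

lemma half:
  fixes K :: "'a \<Rightarrow> bool list"
  assumes "prob_space M" "K \<in> M \<rightarrow>\<^sub>M count_space UNIV" "rsbs M K"
  shows "measure M {x\<in>space M. Suc (length p) \<le> length (K x) \<and> take (length p) (K x) = p \<and> K x ! length p = b}
       = measure M {x\<in>space M. Suc (length p) \<le> length (K x) \<and> take (length p) (K x) = p} / 2"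
proof -
  interpret prob_space M by fact
  let ?A = "{x\<in>space M. Suc (length p) \<le> length (K x) \<and> take (length p) (K x) = p \<and> K x ! length p = b}"
  let ?B = "{x\<in>space M. Suc (length p) \<le> length (K x) \<and> take (length p) (K x) = p}"
  have mA: "?A \<in> sets M" using meas[OF assms(2) assms(2), of "\<lambda>a c. Suc (length p) \<le> length a \<and> take (length p) a = p \<and> a ! length p = b"] by simp
  have mB: "?B \<in> sets M" using meas[OF assms(2) assms(2), of "\<lambda>a c. Suc (length p) \<le> length a \<and> take (length p) a = p"] by simp
  have sub: "?A \<subseteq> ?B" by auto
  show ?thesis
  proof (cases "measure M ?B > 0")
    case True
    have "?A = {x\<in>space M. Suc (length p) \<le> length (K x) \<and> take (Suc (length p) - 1) (K x) = take (Suc (length p) - 1) (p @ [b])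
                                 \<and> K x ! (Suc (length p) - 1) = (p @ [b]) ! (Suc (length p) - 1)}" by simp
    moreover have "?B = {x\<in>space M. Suc (length p) \<le> length (K x) \<and> take (Suc (length p) - 1) (K x) = take (Suc (length p) - 1) (p @ [b])}" by simp
    ultimately have "measure M ?A / measure M ?B = 1/2"
      using assms(3)[unfolded rsbs_def, rule_format, of "Suc (length p)" "p@[b]"] True
      by (simp only: One_nat_def Suc_le_mono le0 length_append_singleton simp_thms)
    then show ?thesis using True by (simp add: field_simps)
  next
    case False
    then have "measure M ?B = 0" using measure_nonneg[of M ?B] by linarith
    moreover have "measure M ?A \<le> measure M ?B" using finite_measure_mono[OF sub mB] .
    ultimately show ?thesis using measure_nonneg[of M ?A] by simp
  qed
qed

lemma split_lt:
  fixes j kk p :: "bool list"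
  assumes "length j = i" "i < n" "length p = n - 1"
  shows "(n \<le> length (j@kk) \<and> take (n-1) (j@kk) = p) \<longleftrightarrow>
     (j = take i p \<and> Suc (length (drop i p)) \<le> length kk \<and> take (length (drop i p)) kk = drop i p)"
    and "(j@kk) ! (n-1) = kk ! length (drop i p)"
proof -
  have ld: "length (drop i p) = n - 1 - i" using assms by simp
  have "take (n-1) (j@kk) = j @ take (n - 1 - i) kk" using assms by simp
  moreover have "(j @ take (n - 1 - i) kk = p) \<longleftrightarrow> (j = take i p \<and> take (n-1-i) kk = drop i p)"
    using assms by (auto simp: append_eq_conv_conj)
  ultimately show "(n \<le> length (j@kk) \<and> take (n-1) (j@kk) = p) \<longleftrightarrow>
     (j = take i p \<and> Suc (length (drop i p)) \<le> length kk \<and> take (length (drop i p)) kk = drop i p)"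
    using assms ld by auto
  have "\<not> (n-1 < i)" using assms by arith
  then show "(j@kk) ! (n-1) = kk ! length (drop i p)" using assms ld by (simp add: nth_append)
qed

lemma split_ge:
  fixes j kk p :: "bool list"
  assumes "n \<le> length j" "length p = n - 1" "1 \<le> n"
  shows "(n \<le> length (j@kk) \<and> take (n-1) (j@kk) = p) \<longleftrightarrow>
     (Suc (length p) \<le> length j \<and> take (length p) j = p)"
    and "(j@kk) ! (n-1) = j ! length p"
  using assms by (auto simp: nth_append)

theorem proposition2:
  fixes M :: "'a measure" and J K :: "'a \<Rightarrow> bool list"
  assumes "prob_space M"
    and "J \<in> M \<rightarrow>\<^sub>M count_space UNIV"
    and "K \<in> M \<rightarrow>\<^sub>M count_space UNIV"
    and "prob_space.indep_var M (count_space UNIV) J (count_space UNIV) K"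
    and "rsbs M J"
    and "rsbs M K"
  shows "rsbs M (\<lambda>\<omega>. J \<omega> @ K \<omega>)"
  unfolding rsbs_def
proof (intro allI impI)
  interpret prob_space M by fact
  fix n :: nat and k :: "bool list"
  assume n1: "1 \<le> n" and lk: "length k = n"
  define p where "p = take (n-1) k"
  define b where "b = k ! (n-1)"
  have lp: "length p = n - 1" using lk by (simp add: p_def)
  have nS: "n = Suc (length p)" using lp n1 by simp
  define Q where "Q = (\<lambda>x. n \<le> length (J x @ K x) \<and> take (n-1) (J x @ K x) = p)"
  define R where "R = (\<lambda>x. n \<le> length (J x @ K x) \<and> take (n-1) (J x @ K x) = p \<and> (J x @ K x) ! (n-1) = b)"
  have mQ: "{x\<in>space M. min (length (J x)) n = i \<and> Q x} \<in> sets M" for i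
    using meas[OF assms(2,3), of "\<lambda>a c. min (length a) n = i \<and> n \<le> length (a @ c) \<and> take (n-1) (a @ c) = p"]
    by (simp add: Q_def)
  have mR: "{x\<in>space M. min (length (J x)) n = i \<and> R x} \<in> sets M" for i
    using meas[OF assms(2,3), of "\<lambda>a c. min (length a) n = i \<and> n \<le> length (a @ c) \<and> take (n-1) (a @ c) = p \<and> (a @ c) ! (n-1) = b"]
    by (simp add: R_def)
  have mQ': "{x\<in>space M. Q x} \<in> sets M"
    using meas[OF assms(2,3), of "\<lambda>a c. n \<le> length (a @ c) \<and> take (n-1) (a @ c) = p"]
    by (simp add: Q_def)
  have mR': "{x\<in>space M. R x} \<in> sets M"
    using meas[OF assms(2,3), of "\<lambda>a c. n \<le> length (a @ c) \<and> take (n-1) (a @ c) = p \<and> (a @ c) ! (n-1) = b"]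
    by (simp add: R_def)
  have sumQ: "measure M {x\<in>space M. Q x} = (\<Sum>i\<in>{..n}. measure M {x\<in>space M. min (length (J x)) n = i \<and> Q x})"
    by (rule prob_sum[of "{..n}" "\<lambda>i x. min (length (J x)) n = i \<and> Q x" Q]) (use mQ mQ' in \<open>auto intro!: AE_I2\<close>)
  have sumR: "measure M {x\<in>space M. R x} = (\<Sum>i\<in>{..n}. measure M {x\<in>space M. min (length (J x)) n = i \<and> R x})"
    by (rule prob_sum[of "{..n}" "\<lambda>i x. min (length (J x)) n = i \<and> R x" R]) (use mR mR' in \<open>auto intro!: AE_I2\<close>)
  have each: "measure M {x\<in>space M. min (length (J x)) n = i \<and> R x} = measure M {x\<in>space M. min (length (J x)) n = i \<and> Q x} / 2"
    if "i \<in> {..n}" for i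
  proof (cases "i = n")
    case True
    have eQ: "{x\<in>space M. min (length (J x)) n = i \<and> Q x} = {x\<in>space M. Suc (length p) \<le> length (J x) \<and> take (length p) (J x) = p}"
    proof (rule Collect_cong)
      fix x
      show "(x \<in> space M \<and> min (length (J x)) n = i \<and> Q x) = (x \<in> space M \<and> Suc (length p) \<le> length (J x) \<and> take (length p) (J x) = p)"
      proof (cases "n \<le> length (J x)")
        case True
        then show ?thesis using split_ge(1)[OF True lp n1, of "K x"] \<open>i = n\<close> by (auto simp: Q_def)
      next
        case False
        then show ?thesis using \<open>i = n\<close> nS by auto
      qed
    qed
    have eR: "{x\<in>space M. min (length (J x)) n = i \<and> R x} = {x\<in>space M. Suc (length p) \<le> length (J x) \<and> take (length p) (J x) = p \<and> J x ! length p = b}"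
    proof (rule Collect_cong)
      fix x
      show "(x \<in> space M \<and> min (length (J x)) n = i \<and> R x) = (x \<in> space M \<and> Suc (length p) \<le> length (J x) \<and> take (length p) (J x) = p \<and> J x ! length p = b)"
      proof (cases "n \<le> length (J x)")
        case True
        then show ?thesis using split_ge[OF True lp n1, of "K x"] \<open>i = n\<close> by (auto simp: R_def)
      next
        case False
        then show ?thesis using \<open>i = n\<close> nS by auto
      qed
    qed
    show ?thesis unfolding eQ eR by (rule half[OF assms(1,2,5)])
  next
    case False
    with that have iln: "i < n" by simp
    define q where "q = drop i p"
    have lq: "length (take i p) = i" using iln lp by simp
    have eQ: "{x\<in>space M. min (length (J x)) n = i \<and> Q x} = {x\<in>space M. J x = take i p \<and> (Suc (length q) \<le> length (K x) \<and> take (length q) (K x) = q)}"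
    proof (rule Collect_cong)
      fix x
      show "(x \<in> space M \<and> min (length (J x)) n = i \<and> Q x) = (x \<in> space M \<and> J x = take i p \<and> (Suc (length q) \<le> length (K x) \<and> take (length q) (K x) = q))"
      proof (cases "length (J x) = i")
        case True
        then show ?thesis using split_lt(1)[OF True iln lp, of "K x"] iln by (auto simp: Q_def q_def)
      next
        case False
        then show ?thesis using iln lq by auto
      qed
    qed
    have eR: "{x\<in>space M. min (length (J x)) n = i \<and> R x} = {x\<in>space M. J x = take i p \<and> (Suc (length q) \<le> length (K x) \<and> take (length q) (K x) = q \<and> K x ! length q = b)}"
    proof (rule Collect_cong)
      fix x
      show "(x \<in> space M \<and> min (length (J x)) n = i \<and> R x) = (x \<in> space M \<and> J x = take i p \<and> (Suc (length q) \<le> length (K x) \<and> take (length q) (K x) = q \<and> K x ! length q = b))"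
      proof (cases "length (J x) = i")
        case True
        then show ?thesis using split_lt[OF True iln lp, of "K x"] iln by (auto simp: R_def q_def)
      next
        case False
        then show ?thesis using iln lq by auto
      qed
    qed
    show ?thesis unfolding eQ eR
      indep2[OF assms(1,4), of "\<lambda>y. y = take i p" "\<lambda>c. Suc (length q) \<le> length c \<and> take (length q) c = q \<and> c ! length q = b"]
      indep2[OF assms(1,4), of "\<lambda>y. y = take i p" "\<lambda>c. Suc (length q) \<le> length c \<and> take (length q) c = q"]
      half[OF assms(1,3,6)] by simp
  qed
  have main: "measure M {x\<in>space M. R x} = measure M {x\<in>space M. Q x} / 2"
    unfolding sumQ sumR sum_divide_distrib using each by (rule sum.cong[OF refl])
  assume pos: "0 < measure M {\<omega> \<in> space M. n \<le> length (J \<omega> @ K \<omega>) \<and> take (n - 1) (J \<omega> @ K \<omega>) = take (n - 1) k}"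
  show "measure M {\<omega> \<in> space M. n \<le> length (J \<omega> @ K \<omega>) \<and> take (n - 1) (J \<omega> @ K \<omega>) = take (n - 1) k
                                 \<and> (J \<omega> @ K \<omega>) ! (n - 1) = k ! (n - 1)}
        / measure M {\<omega> \<in> space M. n \<le> length (J \<omega> @ K \<omega>) \<and> take (n - 1) (J \<omega> @ K \<omega>) = take (n - 1) k} = 1 / 2"
    using main pos unfolding Q_def R_def p_def[symmetric] b_def[symmetric] by simp
qed
end
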